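(* Let $(\mathfrak{g},\langle\cdot,\cdot\rangle_{\mathfrak{g}})$ be an abelian quadratic Lie algebra (i.e. an abelian Lie algebra with a nondegenerate symmetric bilinear form) and let $A\in\mathfrak{so}(\mathfrak{g},\langle\cdot,\cdot\rangle_{\mathfrak{g}})$ be non-nilpotent. Let $\delta_A(\mathfrak{g})=\mathbb{R}e\oplus\mathfrak{g}\oplus\mathbb{R}\bar e$ be the double extension of $\mathfrak{g}$ by $A$, and let $(\mathfrak{a},\langle\cdot,\cdot\rangle_{\mathfrak{a}})$ be an abelian quadratic Lie algebra. Consider the product quadratic Lie algebra $\delta_A(\mathfrak{g})\oplus\mathfrak{a}$ (direct sum of Lie algebras, orthogonal direct sum of the forms). Then every derivation $D$ of $\delta_A(\mathfrak{g})\oplus\mathfrak{a}$ that is skew-symmetric with respect to the quadratic form satisfies $D(e)=0$. In particular, $\delta_A(\mathfrak{g})\oplus\mathfrak{a}$ admits no $k$-symplectic structure for any $k\ge1$.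
   Context: The double extension of a quadratic Lie algebra $(\mathfrak{g},[\cdot,\cdot]_{\mathfrak{g}},\langle\cdot,\cdot\rangle_{\mathfrak{g}})$ by a skew-symmetric endomorphism $A$ is the vector space $\delta_A(\mathfrak{g})=\mathbb{R}e\oplus\mathfrak{g}\oplus\mathbb{R}\bar e$ with nonvanishing brackets $[\bar e,u]=Au$ and $[u,v]=\langle Au,v\rangle_{\mathfrak{g}}\,e+[u,v]_{\mathfrak{g}}$ for $u,v\in\mathfrak{g}$ ($e$ central), and quadratic form $\langle xe+u+\bar x\bar e,\,xe+u+\bar x\bar e\rangle=2x\bar x+\langle u,u\rangle_{\mathfrak{g}}$. A quadratic Lie algebra is a real Lie algebra with a nondegenerate invariant symmetric bilinear form ($\langle[u,v],w\rangle+\langle[u,w],v\rangle=0$). A $k$-symplectic structure on a real Lie algebra $\mathfrak{k}$ of dimension $n(k+1)$ ($n,k\ge1$) is a pair consisting of a Lie subalgebra $\mathfrak{h}\subset\mathfrak{k}$ of dimension $nk$ and a family $(\theta_1,\dots,\theta_k)$ of skew-symmetric bilinear forms on $\mathfrak{k}$ such that: (i) $\bigcap_{i=1}^k\ker\theta_i=\{0\}$, where $\ker\theta_i=\{u:\theta_i(u,v)=0\ \forall v\}$; (ii) each $\theta_i$ is a 2-cocycle: $\theta_i([u,v],w)+\theta_i([v,w],u)+\theta_i([w,u],v)=0$ for all $u,v,w$; (iii) $\theta_i(u,v)=0$ for all $u,v\in\mathfrak{h}$ and all $i$. *)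

theory Defs
  imports "HOL-Analysis.Analysis"
begin

definition bilinear_on :: "'v::real_vector set \<Rightarrow> ('v \<Rightarrow> 'v \<Rightarrow> real) \<Rightarrow> bool" where
  "bilinear_on S B \<longleftrightarrow>
     (\<forall>x\<in>S. \<forall>y\<in>S. \<forall>z\<in>S. \<forall>c::real.
        B (x + y) z = B x z + B y z \<and> B (c *\<^sub>R x) z = c * B x z \<and>
        B z (x + y) = B z x + B z y \<and> B z (c *\<^sub>R x) = c * B z x)"

definition linear_on_carrier :: "'v::real_vector set \<Rightarrow> ('v \<Rightarrow> 'v) \<Rightarrow> bool" where
  "linear_on_carrier S D \<longleftrightarrow>
     (\<forall>x\<in>S. D x \<in> S) \<and>
     (\<forall>x\<in>S. \<forall>y\<in>S. \<forall>c::real. D (x + y) = D x + D y \<and> D (c *\<^sub>R x) = c *\<^sub>R D x)"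

definition quadratic_form_on :: "'v::real_vector set \<Rightarrow> ('v \<Rightarrow> 'v \<Rightarrow> real) \<Rightarrow> bool" where
  "quadratic_form_on S B \<longleftrightarrow> bilinear_on S B \<and>
     (\<forall>x\<in>S. \<forall>y\<in>S. B x y = B y x) \<and>
     (\<forall>x\<in>S. (\<forall>y\<in>S. B x y = 0) \<longrightarrow> x = 0)"

definition lie_derivation_on :: "'v::real_vector set \<Rightarrow> ('v \<Rightarrow> 'v \<Rightarrow> 'v) \<Rightarrow> ('v \<Rightarrow> 'v) \<Rightarrow> bool" where
  "lie_derivation_on K br D \<longleftrightarrow> linear_on_carrier K D \<and>
     (\<forall>x\<in>K. \<forall>y\<in>K. D (br x y) = br (D x) y + br x (D y))"

definition skew_on :: "'v::real_vector set \<Rightarrow> ('v \<Rightarrow> 'v \<Rightarrow> real) \<Rightarrow> ('v \<Rightarrow> 'v) \<Rightarrow> bool" where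
  "skew_on K B D \<longleftrightarrow> (\<forall>x\<in>K. \<forall>y\<in>K. B (D x) y + B x (D y) = 0)"

definition k_symplectic_on ::
  "'v::euclidean_space set \<Rightarrow> ('v \<Rightarrow> 'v \<Rightarrow> 'v) \<Rightarrow> nat \<Rightarrow> 'v set \<Rightarrow> (nat \<Rightarrow> 'v \<Rightarrow> 'v \<Rightarrow> real) \<Rightarrow> bool" where
  "k_symplectic_on K br k h \<theta> \<longleftrightarrow>
     1 \<le> k \<and>
     subspace h \<and> h \<subseteq> K \<and> (\<forall>u\<in>h. \<forall>v\<in>h. br u v \<in> h) \<and>
     (\<exists>n\<ge>1. dim K = n * (k + 1) \<and> dim h = n * k) \<and>
     (\<forall>i\<in>{1..k}.
        bilinear_on K (\<theta> i) \<and>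
        (\<forall>u\<in>K. \<forall>v\<in>K. \<theta> i u v = - \<theta> i v u) \<and>
        (\<forall>u\<in>K. \<forall>v\<in>K. \<forall>w\<in>K.
            \<theta> i (br u v) w + \<theta> i (br v w) u + \<theta> i (br w u) v = 0) \<and>
        (\<forall>u\<in>h. \<forall>v\<in>h. \<theta> i u v = 0)) \<and>
     (\<forall>u\<in>K. (\<forall>i\<in>{1..k}. \<forall>v\<in>K. \<theta> i u v = 0) \<longrightarrow> u = 0)"

text \<open>Elements x e + u + xb ebar of delta_A(g) are triples (x, u, xb).\<close>
fun dext_bracket :: "('g::real_vector \<Rightarrow> 'g \<Rightarrow> 'g) \<Rightarrow> ('g \<Rightarrow> 'g \<Rightarrow> real) \<Rightarrow> ('g \<Rightarrow> 'g)
     \<Rightarrow> real \<times> 'g \<times> real \<Rightarrow> real \<times> 'g \<times> real \<Rightarrow> real \<times> 'g \<times> real" where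
  "dext_bracket brg Bg A (x, u, xb) (y, v, yb) =
     (Bg (A u) v, xb *\<^sub>R A v - yb *\<^sub>R A u + brg u v, 0)"

fun dext_form :: "('g::real_vector \<Rightarrow> 'g \<Rightarrow> real) \<Rightarrow> real \<times> 'g \<times> real \<Rightarrow> real \<times> 'g \<times> real \<Rightarrow> real" where
  "dext_form Bg (x, u, xb) (y, v, yb) = x * yb + xb * y + Bg u v"

definition dext_e :: "real \<times> 'g::real_vector \<times> real" where
  "dext_e = (1, 0, 0)"

fun prod_bracket :: "('p \<Rightarrow> 'p \<Rightarrow> 'p) \<Rightarrow> ('q \<Rightarrow> 'q \<Rightarrow> 'q) \<Rightarrow> 'p \<times> 'q \<Rightarrow> 'p \<times> 'q \<Rightarrow> 'p \<times> 'q" where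
  "prod_bracket b1 b2 (p, w) (q, w') = (b1 p q, b2 w w')"

fun prod_form :: "('p \<Rightarrow> 'p \<Rightarrow> real) \<Rightarrow> ('q \<Rightarrow> 'q \<Rightarrow> real) \<Rightarrow> 'p \<times> 'q \<Rightarrow> 'p \<times> 'q \<Rightarrow> real" where
  "prod_form B1 B2 (p, w) (q, w') = B1 p q + B2 w w'"

end

theory Submission
  imports Defs
begin

lemma funpow_linear: fixes A :: "'g::real_vector \<Rightarrow> 'g" shows "linear A \<Longrightarrow> linear (A ^^ k)"
proof (induction k)
  case 0 show ?case by (simp add: linear_iff funpow_0)
next
  case (Suc k) then show ?case using linear_compose[OF Suc.IH Suc.prems] by (simp only: funpow.simps(2))
qed

lemma comm_nilp:
  fixes P A :: "'g::euclidean_space \<Rightarrow> 'g"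
  assumes P: "linear P" and A: "linear A" and c: "c \<noteq> 0"
    and rel: "\<forall>u. P (A u) - A (P u) = c *\<^sub>R A u"
  shows "\<exists>m. A ^^ m = (\<lambda>_. 0)"
proof -
  have ind: "\<forall>u. P ((A ^^ k) u) - (A ^^ k) (P u) = (real k * c) *\<^sub>R (A ^^ k) u" for k
  proof (induction k)
    case 0 then show ?case by simp
  next
    case (Suc k)
    show ?case
    proof
      fix u
      have "P ((A ^^ Suc k) u) = P (A ((A ^^ k) u))" by simp
      also have "\<dots> = A (P ((A ^^ k) u)) + c *\<^sub>R A ((A ^^ k) u)" using rel[rule_format, of "(A ^^ k) u"] by (simp add: algebra_simps)
      also have "P ((A ^^ k) u) = (A ^^ k) (P u) + (real k * c) *\<^sub>R (A ^^ k) u" using Suc[rule_format, of u] by (simp add: algebra_simps)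
      finally show "P ((A ^^ Suc k) u) - (A ^^ Suc k) (P u) = (real (Suc k) * c) *\<^sub>R (A ^^ Suc k) u"
        using A by (simp add: linear_add linear_scale algebra_simps)
    qed
  qed
  have bP: "bounded_linear P" using P by (simp add: linear_conv_bounded_linear)
  obtain k :: nat where k: "real k * \<bar>c\<bar> > 2 * onorm P"
    using reals_Archimedean3[of "\<bar>c\<bar>"] c by auto
  have bA: "bounded_linear (A ^^ k)" using funpow_linear[OF A] by (simp add: linear_conv_bounded_linear)
  have "onorm (\<lambda>u. (real k * c) *\<^sub>R (A ^^ k) u) = \<bar>real k * c\<bar> * onorm (A ^^ k)"
    by (rule onorm_scaleR[OF bA])
  also have "(\<lambda>u. (real k * c) *\<^sub>R (A ^^ k) u) = (\<lambda>u. (P \<circ> (A ^^ k)) u + (- ((A ^^ k) \<circ> P) u))"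
    using ind[of k] by (auto simp: fun_eq_iff)
  finally have eq: "onorm (\<lambda>u. (P \<circ> (A ^^ k)) u + (- ((A ^^ k) \<circ> P) u)) = \<bar>real k * c\<bar> * onorm (A ^^ k)" .
  have b1: "bounded_linear (P \<circ> (A ^^ k))" using bP bA bounded_linear_compose by (auto simp: o_def)
  have b2: "bounded_linear ((A ^^ k) \<circ> P)" using bP bA bounded_linear_compose by (auto simp: o_def)
  have b3: "bounded_linear (\<lambda>u. - ((A ^^ k) \<circ> P) u)" using b2 bounded_linear_minus by blast
  have "onorm (\<lambda>u. (P \<circ> (A ^^ k)) u + (- ((A ^^ k) \<circ> P) u)) \<le> onorm (P \<circ> (A ^^ k)) + onorm (\<lambda>u. - ((A ^^ k) \<circ> P) u)"
    by (rule onorm_triangle[OF b1 b3])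
  also have "\<dots> \<le> onorm P * onorm (A ^^ k) + onorm (A ^^ k) * onorm P"
    unfolding onorm_neg using onorm_compose[OF bP bA] onorm_compose[OF bA bP] by linarith
  finally have "\<bar>real k * c\<bar> * onorm (A ^^ k) \<le> 2 * onorm P * onorm (A ^^ k)" using eq by simp
  moreover have "0 \<le> onorm (A ^^ k)" by (rule onorm_pos_le[OF bA])
  ultimately have "onorm (A ^^ k) = 0"
  proof (cases "onorm (A ^^ k) = 0")
    case False
    assume h: "\<bar>real k * c\<bar> * onorm (A ^^ k) \<le> 2 * onorm P * onorm (A ^^ k)" "0 \<le> onorm (A ^^ k)"
    with False have "0 < onorm (A ^^ k)" by simp
    with h have "\<bar>real k * c\<bar> \<le> 2 * onorm P" using mult_right_le_imp_le by blast
    with k show ?thesis by (simp add: abs_mult)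
  qed
  then have "\<forall>x. (A ^^ k) x = 0" using onorm_eq_0[OF bA] by simp
  then show ?thesis by (auto simp: fun_eq_iff)
qed

lemma qf_lin:
  assumes "quadratic_form_on UNIV Bg"
  shows "linear (Bg z)" "linear (\<lambda>x. Bg x z)" "Bg x y = Bg y x"
  using assms unfolding quadratic_form_on_def bilinear_on_def linear_iff by auto

lemma lin_basis_exp:
  fixes g :: "'g::euclidean_space \<Rightarrow> real"
  assumes "linear g"
  shows "g v = (\<Sum>b\<in>Basis. (v \<bullet> b) * g b)"
proof -
  have "g v = g (\<Sum>b\<in>Basis. (v \<bullet> b) *\<^sub>R b)" by (simp add: euclidean_representation)
  also have "\<dots> = (\<Sum>b\<in>Basis. g ((v \<bullet> b) *\<^sub>R b))" using linear_sum[OF assms] by (simp add: o_def)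
  also have "\<dots> = (\<Sum>b\<in>Basis. (v \<bullet> b) * g b)" using linear_scale[OF assms] by simp
  finally show ?thesis .
qed

lemma riesz:
  fixes Bg :: "'g::euclidean_space \<Rightarrow> 'g \<Rightarrow> real"
  assumes q: "quadratic_form_on UNIV Bg" and f: "linear f"
  shows "\<exists>z. \<forall>v. f v = Bg z v"
proof -
  define M where "M z = (\<Sum>b\<in>Basis. Bg z b *\<^sub>R b)" for z
  have Mb: "M z \<bullet> b = Bg z b" if "b \<in> Basis" for z b
    unfolding M_def using that by (simp add: inner_sum_left_Basis)
  have a1: "Bg (x + y) z = Bg x z + Bg y z" and s1: "Bg (c *\<^sub>R x) z = c * Bg x z" for x y z c
    using q unfolding quadratic_form_on_def bilinear_on_def by auto
  have linM: "linear M"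
    unfolding linear_iff M_def by (simp add: a1 s1 scaleR_add_left sum.distrib scaleR_sum_right)
  have Bexp: "Bg z v = (\<Sum>b\<in>Basis. (v \<bullet> b) * Bg z b)" for z v
    using lin_basis_exp[OF qf_lin(1)[OF q]] by blast
  have injM: "inj M"
  proof (rule injI)
    fix x y assume "M x = M y"
    then have "Bg (x - y) b = 0" if "b \<in> Basis" for b
      using Mb[OF that, of x] Mb[OF that, of y] a1[of "x - y" y b] by simp
    then have "Bg (x - y) v = 0" for v using Bexp[of "x - y" v] by simp
    then have "x - y = 0" using q unfolding quadratic_form_on_def by blast
    then show "x = y" by simp
  qed
  have "surj M" using linear_injective_imp_surjective[OF linM injM] by simp
  then obtain z where z: "M z = (\<Sum>b\<in>Basis. f b *\<^sub>R b)" by (metis surjD)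
  have "Bg z b = f b" if "b \<in> Basis" for b
    using Mb[OF that, of z] z that by (simp add: inner_sum_left_Basis)
  then have "f v = Bg z v" for v
    using Bexp[of z v] lin_basis_exp[OF f, of v] by simp
  then show ?thesis by blast
qed

lemma core:
  fixes Bg :: "'g::euclidean_space \<Rightarrow> 'g \<Rightarrow> real"
    and A :: "'g \<Rightarrow> 'g"
    and Sa :: "'a::euclidean_space set"
    and \<theta> :: "(real \<times> 'g \<times> real) \<times> 'a \<Rightarrow> (real \<times> 'g \<times> real) \<times> 'a \<Rightarrow> real"
  assumes q: "quadratic_form_on UNIV Bg"
    and A_lin: "linear A"
    and A_skew: "\<forall>u v. Bg (A u) v = - Bg u (A v)"
    and A_nn: "\<forall>m. A ^^ m \<noteq> (\<lambda>_. 0)"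
    and Sa_sub: "subspace Sa"
    and brd: "br = prod_bracket (dext_bracket (\<lambda>_ _. 0) Bg A) (\<lambda>_ _. 0)"
    and Vd: "V = (UNIV :: (real \<times> 'g \<times> real) set) \<times> Sa"
    and bil: "bilinear_on V \<theta>"
    and sk: "\<forall>u\<in>V. \<forall>v\<in>V. \<theta> u v = - \<theta> v u"
    and coc: "\<forall>u\<in>V. \<forall>v\<in>V. \<forall>w\<in>V. \<theta> (br u v) w + \<theta> (br v w) u + \<theta> (br w u) v = 0"
  shows "\<forall>y\<in>V. \<theta> (dext_e, 0) y = 0"
proof -
  have a1: "Bg (x + y) z = Bg x z + Bg y z" and s1: "Bg (c *\<^sub>R x) z = c * Bg x z"
    and a2: "Bg z (x + y) = Bg z x + Bg z y" and s2: "Bg z (c *\<^sub>R x) = c * Bg z x"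
    and sym: "Bg x y = Bg y x" for x y z c
    using q unfolding quadratic_form_on_def bilinear_on_def by auto
  have B0[simp]: "Bg 0 x = 0" "Bg x 0 = 0" for x using s1[of 0 0 x] s2[of x 0 0] by auto
  have Bneg: "Bg (- x) z = - Bg x z" for x z using s1[of "-1" x z] by simp
  have nd: "(\<forall>v. Bg x v = 0) \<Longrightarrow> x = 0" for x using q unfolding quadratic_form_on_def by blast
  have A0[simp]: "A 0 = 0" using A_lin by (simp add: linear_0)
  have Aadd: "A (x + y) = A x + A y" and Ascale: "A (c *\<^sub>R x) = c *\<^sub>R A x" for x y c
    using A_lin by (simp_all add: linear_add linear_scale)
  have Sa0[simp]: "0 \<in> Sa" using Sa_sub by (simp add: subspace_0)
  have inV[simp]: "(p, w) \<in> V \<longleftrightarrow> w \<in> Sa" for p w by (simp add: Vd)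
  have brf[simp]: "br ((x,u,xb),w) ((y,v,yb),w') = ((Bg (A u) v, xb *\<^sub>R A v - yb *\<^sub>R A u, 0), 0)"
    for x u xb w y v yb w' by (simp add: brd)
  have tA: "\<theta> (x + y) z = \<theta> x z + \<theta> y z" "\<theta> (c *\<^sub>R x) z = c * \<theta> x z"
     "\<theta> z (x + y) = \<theta> z x + \<theta> z y" "\<theta> z (c *\<^sub>R x) = c * \<theta> z x"
    if "x \<in> V" "y \<in> V" "z \<in> V" for x y z c
    using bil that unfolding bilinear_on_def by auto
  have tA2: "\<theta> (c *\<^sub>R x) z = c * \<theta> x z" and tA4: "\<theta> z (c *\<^sub>R x) = c * \<theta> z x"
    if "x \<in> V" "z \<in> V" for x z c using tA[OF that(1) that(1) that(2)] by auto
  define e :: "(real \<times> 'g \<times> real) \<times> 'a" where "e = ((1,0,0),0)"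
  have eV[simp]: "e \<in> V" by (simp add: e_def)
  have thE: "\<theta> ((c,0,0),0) y = c * \<theta> e y" if "y \<in> V" for c y
    using tA(2)[OF eV eV that, of c] by (simp add: e_def)
  have thE': "\<theta> y ((c,0,0),0) = c * \<theta> y e" if "y \<in> V" for c y
    using tA(4)[OF eV eV that, of c] by (simp add: e_def)
  have thz[simp]: "\<theta> ((0,0,0),0) y = 0" if "y \<in> V" for y using thE[OF that, of 0] by simp
  have cocg: "\<theta> (br x y) z + \<theta> (br y z) x + \<theta> (br z x) y = 0" if "x \<in> V" "y \<in> V" "z \<in> V" for x y z
    using coc that by blast
  obtain u0 where u0: "A u0 \<noteq> 0" using A_nn[rule_format, of 1] by (auto simp: fun_eq_iff)
  obtain v0 where v0: "Bg (A u0) v0 \<noteq> 0" using nd u0 by blast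
  have pa: "\<theta> e ((0,0,0),w) = 0" if "w \<in> Sa" for w
  proof -
    have "\<theta> (br ((0,u0,0),0) ((0,v0,0),0)) ((0,0,0),w) + \<theta> (br ((0,v0,0),0) ((0,0,0),w)) ((0,u0,0),0)
          + \<theta> (br ((0,0,0),w) ((0,u0,0),0)) ((0,v0,0),0) = 0" by (rule cocg) (simp_all add: that)
    then have "Bg (A u0) v0 * \<theta> e ((0,0,0),w) = 0" using thE that by simp
    then show ?thesis using v0 by simp
  qed
  define \<phi> where "\<phi> t = \<theta> e ((0,t,0),0)" for t
  have phA: "\<phi> (A s) = 0" for s
  proof -
    have "\<theta> (br ((0,0,1),0) ((0,s,0),0)) e + \<theta> (br ((0,s,0),0) e) ((0,0,1),0)
          + \<theta> (br e ((0,0,1),0)) ((0,s,0),0) = 0" by (rule cocg) (simp_all add: e_def)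
    then have "\<theta> ((0,A s,0),0) e = 0" by (simp add: e_def)
    moreover have "\<theta> e ((0,A s,0),0) = - \<theta> ((0,A s,0),0) e" using sk[rule_format, of e "((0,A s,0),0)"] by simp
    ultimately show ?thesis unfolding \<phi>_def by simp
  qed
  have rel: "Bg (A u) v * \<phi> t + Bg (A v) t * \<phi> u + Bg (A t) u * \<phi> v = 0" for u v t
  proof -
    have "\<theta> (br ((0,u,0),0) ((0,v,0),0)) ((0,t,0),0) + \<theta> (br ((0,v,0),0) ((0,t,0),0)) ((0,u,0),0)
          + \<theta> (br ((0,t,0),0) ((0,u,0),0)) ((0,v,0),0) = 0" by (rule cocg) (simp_all add: e_def)
    then show ?thesis using thE by (simp add: \<phi>_def)
  qed
  have rel2: "\<phi> v *\<^sub>R A (A u) = \<phi> u *\<^sub>R A (A v)" for u v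
  proof -
    have "Bg (\<phi> v *\<^sub>R A (A u) - \<phi> u *\<^sub>R A (A v)) s = 0" for s
    proof -
      have h1: "Bg (A v) (A s) = - Bg (A (A v)) s" using A_skew by simp
      have h2: "Bg (A (A s)) u = Bg (A (A u)) s"
        using A_skew[rule_format, of "A s" u] A_skew[rule_format, of s "A u"] sym[of s "A (A u)"] by simp
      have d1: "Bg (x - y) z = Bg x z - Bg y z" for x y z
        using a1[of x "(-1) *\<^sub>R y" z] s1[of "-1" y z] by simp
      show ?thesis using rel[of u v "A s"] phA[of s] h1 h2
        by (simp add: d1 s1 algebra_simps)
    qed
    then show ?thesis using nd by (metis eq_iff_diff_eq_0)
  qed
  have pg: "\<phi> t = 0" for t
  proof (rule ccontr)
    assume h: "\<phi> t \<noteq> 0"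
    have A2: "A (A v) = (\<phi> v / \<phi> t) *\<^sub>R A (A t)" for v
    proof -
      have "A (A v) = inverse (\<phi> t) *\<^sub>R (\<phi> t *\<^sub>R A (A v))" using h by simp
      also have "\<dots> = inverse (\<phi> t) *\<^sub>R (\<phi> v *\<^sub>R A (A t))" using rel2[of v t] by simp
      finally show ?thesis by (simp add: divide_inverse mult.commute)
    qed
    have "(A ^^ 4) v = 0" for v
    proof -
      have "(A ^^ 4) v = A (A (A (A v)))" by (simp add: numeral_eq_Suc)
      also have "\<dots> = (\<phi> v / \<phi> t) *\<^sub>R A (A (A (A t)))" using A2[of v] by (simp add: Ascale)
      also have "A (A (A (A t))) = 0" using A2[of "A (A t)"] phA[of "A t"] by simp
      finally show ?thesis by simp
    qed
    then show False using A_nn by (auto simp: fun_eq_iff)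
  qed
  define c where "c = \<theta> e ((0,0,1),0)"
  define \<omega> where "\<omega> u v = \<theta> ((0,u,0),0) ((0,v,0),0)" for u v
  have gadd: "((0::real, x + y, 0::real), 0::'a) = ((0,x,0),0) + ((0,y,0),0)" for x y :: 'g by simp
  have gsc: "((0::real, r *\<^sub>R x, 0::real), 0::'a) = r *\<^sub>R ((0,x,0),0)" for x :: 'g and r by simp
  have om_lin2: "linear (\<omega> u)" for u
  proof (unfold linear_iff, intro conjI allI)
    fix x y show "\<omega> u (x+y) = \<omega> u x + \<omega> u y" unfolding \<omega>_def by (subst gadd) (rule tA(3); simp)
  next
    fix r x have "\<omega> u (r *\<^sub>R x) = r * \<omega> u x" unfolding \<omega>_def by (subst gsc) (rule tA4; simp)
    then show "\<omega> u (r *\<^sub>R x) = r *\<^sub>R \<omega> u x" by simp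
  qed
  have om_add1: "\<omega> (x + y) v = \<omega> x v + \<omega> y v" for x y v
    unfolding \<omega>_def by (subst gadd) (rule tA(1); simp)
  have om_sc1: "\<omega> (r *\<^sub>R x) v = r * \<omega> x v" for x v r
    unfolding \<omega>_def by (subst gsc) (rule tA2; simp)
  have om_sk: "\<omega> u v = - \<omega> v u" for u v unfolding \<omega>_def using sk[rule_format, of "((0,u,0),0)" "((0,v,0),0)"] by simp
  have uniq: "(\<forall>v. Bg x v = Bg y v) \<Longrightarrow> x = y" for x y
  proof -
    assume h: "\<forall>v. Bg x v = Bg y v"
    have "Bg (x - y) v = 0" for v using h a1[of x "(-1) *\<^sub>R y" v] s1[of "-1" y v] by simp
    then have "x - y = 0" using nd by blast
    then show "x = y" by simp
  qed
  define P where "P u = (SOME z. \<forall>v. \<omega> u v = Bg z v)" for u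
  have Pr: "\<omega> u v = Bg (P u) v" for u v
  proof -
    obtain z where "\<forall>v. \<omega> u v = Bg z v" using riesz[OF q om_lin2] by blast
    then have "\<forall>v. \<omega> u v = Bg (P u) v" unfolding P_def by (rule someI)
    then show ?thesis by blast
  qed
  have P_lin: "linear P"
    unfolding linear_iff
  proof (intro conjI allI)
    fix x y show "P (x + y) = P x + P y" by (rule uniq) (simp add: a1 om_add1 Pr[symmetric])
  next
    fix r x show "P (r *\<^sub>R x) = r *\<^sub>R P x" by (rule uniq) (simp add: s1 om_sc1 Pr[symmetric])
  qed
  have relc: "\<omega> (A u) v + \<omega> u (A v) + c * Bg (A u) v = 0" for u v
  proof -
    have "\<theta> (br ((0,0,1),0) ((0,u,0),0)) ((0,v,0),0) + \<theta> (br ((0,u,0),0) ((0,v,0),0)) ((0,0,1),0)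
          + \<theta> (br ((0,v,0),0) ((0,0,1),0)) ((0,u,0),0) = 0" by (rule cocg) simp_all
    then have "\<omega> (A u) v + Bg (A u) v * c + \<omega> (- A v) u = 0"
      using thE[of "((0,0,1),0)"] by (simp add: \<omega>_def c_def)
    moreover have "\<omega> (- A v) u = \<omega> u (A v)"
      using om_sk[of "- A v" u] om_sc1[of "-1" "A v" u] om_sk[of "A v" u] by simp
    ultimately show ?thesis by (simp add: algebra_simps)
  qed
  have "P (A u) - A (P u) = (- c) *\<^sub>R A u" for u
  proof (rule uniq, rule allI)
    fix v
    have "Bg (P u) (A v) = - Bg (A (P u)) v" using A_skew by simp
    then have "Bg (P (A u)) v - Bg (A (P u)) v + c * Bg (A u) v = 0" using relc[of u v] by (simp add: Pr)
    moreover have "Bg (P (A u) - A (P u)) v = Bg (P (A u)) v - Bg (A (P u)) v"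
      using a1[of "P (A u)" "(-1) *\<^sub>R A (P u)" v] s1[of "-1" "A (P u)" v] by simp
    ultimately show "Bg (P (A u) - A (P u)) v = Bg ((- c) *\<^sub>R A u) v" by (simp add: s1 Bneg)
  qed
  then have c0: "c = 0" using comm_nilp[OF P_lin A_lin, of "- c"] A_nn by auto
  show ?thesis
  proof
    fix y assume "y \<in> V"
    then obtain x u xb w where y: "y = ((x,u,xb),w)" and w: "w \<in> Sa" by (cases y) auto
    have dec: "y = x *\<^sub>R e + (((0,u,0),0) + (xb *\<^sub>R ((0,0,1),0) + ((0,0,0),w)))"
      by (simp add: y e_def)
    have ee: "\<theta> e e = 0" using sk[rule_format, OF eV eV] by simp
    have SaA: "w1 + w2 \<in> Sa" "r *\<^sub>R w1 \<in> Sa" if "w1 \<in> Sa" "w2 \<in> Sa" for w1 w2 r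
      using Sa_sub that by (auto simp: subspace_add subspace_scale)
    have gV: "((0,u,0),0) \<in> V" and bV: "((0,0,1),0) \<in> V" and aV: "((0,0,0),w) \<in> V" using w by auto
    have V1: "xb *\<^sub>R ((0,0,1),0) + ((0,0,0),w) \<in> V" using w by (simp add: SaA)
    have V2: "((0,u,0),0) + (xb *\<^sub>R ((0,0,1),0) + ((0,0,0),w)) \<in> V" using w by (simp add: SaA)
    have V3: "x *\<^sub>R e \<in> V" by (simp add: e_def)
    have "\<theta> e y = \<theta> e (x *\<^sub>R e) + (\<theta> e ((0,u,0),0) + (\<theta> e (xb *\<^sub>R ((0,0,1),0)) + \<theta> e ((0,0,0),w)))"
      unfolding dec tA(3)[OF V3 V2 eV] tA(3)[OF gV V1 eV]
      using tA(3)[OF _ aV eV, of "xb *\<^sub>R ((0,0,1),0)"] by (simp add: e_def)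
    also have "\<dots> = 0" using tA4[OF eV eV, of x] tA4[OF bV eV, of xb] ee pa[OF w] pg[of u] c0
      by (simp add: c_def \<phi>_def)
    finally show "\<theta> (dext_e, 0) y = 0" by (simp add: dext_e_def e_def)
  qed
qed

lemma deriv_cocycle:
  fixes V :: "'v::real_vector set"
  assumes Qbil: "bilinear_on V Q" and Qsym: "\<forall>x\<in>V. \<forall>y\<in>V. Q x y = Q y x"
    and inv: "\<forall>x\<in>V. \<forall>y\<in>V. \<forall>z\<in>V. Q (br x y) z = - Q y (br x z)"
    and anti: "\<forall>x\<in>V. \<forall>y\<in>V. br x y = - br y x"
    and brV: "\<forall>x\<in>V. \<forall>y\<in>V. br x y \<in> V"
    and der: "lie_derivation_on V br D" and sk: "skew_on V Q D"
  shows "bilinear_on V (\<lambda>x y. Q (D x) y) \<and> (\<forall>u\<in>V. \<forall>v\<in>V. Q (D u) v = - Q (D v) u)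
    \<and> (\<forall>u\<in>V. \<forall>v\<in>V. \<forall>w\<in>V. Q (D (br u v)) w + Q (D (br v w)) u + Q (D (br w u)) v = 0)"
proof -
  have DV: "D x \<in> V" if "x \<in> V" for x using der that unfolding lie_derivation_on_def linear_on_carrier_def by blast
  have Dlin: "D (x + y) = D x + D y" "D (c *\<^sub>R x) = c *\<^sub>R D x" if "x \<in> V" "y \<in> V" for x y c
    using der that unfolding lie_derivation_on_def linear_on_carrier_def by blast+
  have Dder: "D (br x y) = br (D x) y + br x (D y)" if "x \<in> V" "y \<in> V" for x y
    using der that unfolding lie_derivation_on_def by blast
  have QA: "Q (x + y) z = Q x z + Q y z" "Q (c *\<^sub>R x) z = c * Q x z"
     "Q z (x + y) = Q z x + Q z y" "Q z (c *\<^sub>R x) = c * Q z x"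
    if "x \<in> V" "y \<in> V" "z \<in> V" for x y z c
    using Qbil that unfolding bilinear_on_def by auto
  have Qneg: "Q (- x) z = - Q x z" "Q z (- x) = - Q z x" if "x \<in> V" "z \<in> V" for x z
    using QA(2)[OF that(1) that(1) that(2), of "-1"] QA(4)[OF that(1) that(1) that(2), of "-1"] by simp_all
  have skD: "Q (D x) y = - Q x (D y)" if "x \<in> V" "y \<in> V" for x y
    using sk that unfolding skew_on_def by (simp add: eq_neg_iff_add_eq_0)
  have assoc: "Q (br a b) c = Q a (br b c)" if "a \<in> V" "b \<in> V" "c \<in> V" for a b c
  proof -
    have "Q (br a b) c = Q (- br b a) c" using anti[rule_format, of a b] that by simp
    also have "\<dots> = - Q (br b a) c" using Qneg brV that by simp
    also have "\<dots> = Q a (br b c)" using inv[rule_format, of b a c] that by simp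
    finally show ?thesis .
  qed
  have expand: "Q (D (br a b)) c = Q (D a) (br b c) + Q (D b) (br c a)" if "a \<in> V" "b \<in> V" "c \<in> V" for a b c
  proof -
    have "Q (D (br a b)) c = Q (br (D a) b) c + Q (br a (D b)) c"
      using Dder that QA(1) brV DV by simp
    moreover have "Q (br (D a) b) c = Q (D a) (br b c)" using assoc DV that by simp
    moreover have "Q (br a (D b)) c = Q (D b) (br c a)"
    proof -
      have "Q (br a (D b)) c = Q (- br (D b) a) c" using anti[rule_format, of a "D b"] DV that by simp
      also have "\<dots> = - Q (br (D b) a) c" using Qneg brV DV that by simp
      also have "\<dots> = - Q (D b) (br a c)" using assoc DV that by simp
      also have "\<dots> = - Q (D b) (- br c a)" using anti[rule_format, of a c] that by simp
      also have "\<dots> = Q (D b) (br c a)" using Qneg brV DV that by simp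
      finally show ?thesis .
    qed
    ultimately show ?thesis by simp
  qed
  have T: "Q (D a) (br b c) = - Q (D (br b c)) a" if "a \<in> V" "b \<in> V" "c \<in> V" for a b c
    using skD[of a "br b c"] Qsym[rule_format, of a "D (br b c)"] brV DV that by simp
  show ?thesis
  proof (intro conjI ballI)
    show "bilinear_on V (\<lambda>x y. Q (D x) y)"
      unfolding bilinear_on_def using Dlin DV QA by simp
  next
    fix u v assume "u \<in> V" "v \<in> V"
    then show "Q (D u) v = - Q (D v) u" using skD[of u v] Qsym[rule_format, of u "D v"] DV by simp
  next
    fix u v w assume uvw: "u \<in> V" "v \<in> V" "w \<in> V"
    show "Q (D (br u v)) w + Q (D (br v w)) u + Q (D (br w u)) v = 0"
      using expand[OF uvw] T[OF uvw(1) uvw(2) uvw(3)] T[OF uvw(2) uvw(3) uvw(1)] by simp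
  qed
qed

theorem mainTheorem8:
  fixes Bg :: "'g::euclidean_space \<Rightarrow> 'g \<Rightarrow> real"
    and A :: "'g \<Rightarrow> 'g"
    and Sa :: "'a::euclidean_space set"
    and Ba :: "'a \<Rightarrow> 'a \<Rightarrow> real"
  assumes g_quad: "quadratic_form_on UNIV Bg"
    and A_lin: "linear A"
    and A_skew: "\<forall>u v. Bg (A u) v = - Bg u (A v)"
    and A_not_nilpotent: "\<forall>m. A ^^ m \<noteq> (\<lambda>_. 0)"
    and Sa_sub: "subspace Sa"
    and a_quad: "quadratic_form_on Sa Ba"
  defines "V \<equiv> (UNIV :: (real \<times> 'g \<times> real) set) \<times> Sa"
    and "br \<equiv> prod_bracket (dext_bracket (\<lambda>_ _. 0) Bg A) (\<lambda>_ _. 0)"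
    and "Q \<equiv> prod_form (dext_form Bg) Ba"
  shows "(\<forall>D. lie_derivation_on V br D \<and> skew_on V Q D \<longrightarrow> D (dext_e, 0) = 0)
         \<and> (\<forall>k h \<theta>. \<not> k_symplectic_on V br k h \<theta>)"
proof -
  have a1: "Bg (x + y) z = Bg x z + Bg y z" and s1: "Bg (c *\<^sub>R x) z = c * Bg x z"
    and a2: "Bg z (x + y) = Bg z x + Bg z y" and s2: "Bg z (c *\<^sub>R x) = c * Bg z x"
    and bsym: "Bg x y = Bg y x" for x y z c
    using g_quad unfolding quadratic_form_on_def bilinear_on_def by auto
  have B0[simp]: "Bg 0 x = 0" "Bg x 0 = 0" for x using s1[of 0 0 x] s2[of x 0 0] by auto
  have Bneg: "Bg (- x) z = - Bg x z" "Bg z (- x) = - Bg z x" for x z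
    using s1[of "-1" x z] s2[of z "-1" x] by simp_all
  have ndg: "(\<forall>v. Bg x v = 0) \<Longrightarrow> x = 0" for x using g_quad unfolding quadratic_form_on_def by blast
  have Sa0[simp]: "0 \<in> Sa" using Sa_sub by (simp add: subspace_0)
  have SaA[simp]: "w1 + w2 \<in> Sa" "r *\<^sub>R w1 \<in> Sa" if "w1 \<in> Sa" "w2 \<in> Sa" for w1 w2 r
    using Sa_sub that by (auto simp: subspace_add subspace_scale)
  have SaN[simp]: "- w1 \<in> Sa" if "w1 \<in> Sa" for w1 using SaA(2)[OF that that, of "-1"] by simp
  have aa1: "Ba (x + y) z = Ba x z + Ba y z" and as1: "Ba (c *\<^sub>R x) z = c * Ba x z"
    and aa2: "Ba z (x + y) = Ba z x + Ba z y" and as2: "Ba z (c *\<^sub>R x) = c * Ba z x"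
    if "x \<in> Sa" "y \<in> Sa" "z \<in> Sa" for x y z c
    using a_quad that unfolding quadratic_form_on_def bilinear_on_def by auto
  have asym: "Ba x y = Ba y x" if "x \<in> Sa" "y \<in> Sa" for x y
    using a_quad that unfolding quadratic_form_on_def by auto
  have nda: "x \<in> Sa \<Longrightarrow> (\<forall>v\<in>Sa. Ba x v = 0) \<Longrightarrow> x = 0" for x
    using a_quad unfolding quadratic_form_on_def by blast
  have Ba0: "Ba 0 x = 0" "Ba x 0 = 0" if "x \<in> Sa" for x
    using as1[OF Sa0 Sa0 that, of 0] as2[OF Sa0 Sa0 that, of 0] by auto
  have A0[simp]: "A 0 = 0" using A_lin by (simp add: linear_0)
  have Aadd: "A (x + y) = A x + A y" and Ascale: "A (c *\<^sub>R x) = c *\<^sub>R A x" for x y c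
    using A_lin by (simp_all add: linear_add linear_scale)
  have Aneg: "A (- x) = - A x" for x using Ascale[of "-1" x] by simp
  have inV[simp]: "(p, w) \<in> V \<longleftrightarrow> w \<in> Sa" for p w by (simp add: V_def)
  have brf[simp]: "br ((x,u,xb),w) ((y,v,yb),w') = ((Bg (A u) v, xb *\<^sub>R A v - yb *\<^sub>R A u, 0), 0)"
    for x u xb w y v yb w' by (simp add: br_def)
  have Qf[simp]: "Q ((x,u,xb),w) ((y,v,yb),w') = x * yb + xb * y + Bg u v + Ba w w'"
    for x u xb w y v yb w' by (simp add: Q_def)
  have core_app: "\<forall>y\<in>V. \<theta> (dext_e, 0) y = 0"
    if "bilinear_on V \<theta>" "\<forall>u\<in>V. \<forall>v\<in>V. \<theta> u v = - \<theta> v u"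
       "\<forall>u\<in>V. \<forall>v\<in>V. \<forall>w\<in>V. \<theta> (br u v) w + \<theta> (br v w) u + \<theta> (br w u) v = 0" for \<theta>
    by (rule core[OF g_quad A_lin A_skew A_not_nilpotent Sa_sub br_def[THEN meta_eq_to_obj_eq] V_def[THEN meta_eq_to_obj_eq] that])
  have eV: "(dext_e, 0) \<in> V" by (simp add: dext_e_def)
  have part1: "D (dext_e, 0) = 0" if D: "lie_derivation_on V br D" "skew_on V Q D" for D
  proof -
    have Qbil: "bilinear_on V Q"
      unfolding bilinear_on_def
    proof (intro ballI allI)
      fix x y z :: "(real \<times> 'g \<times> real) \<times> 'a" and c :: real
      assume "x \<in> V" "y \<in> V" "z \<in> V"
      then obtain x1 u1 xb1 w1 y1 u2 yb1 w2 z1 u3 zb1 w3 where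
        xyz: "x = ((x1,u1,xb1),w1)" "y = ((y1,u2,yb1),w2)" "z = ((z1,u3,zb1),w3)"
        and w: "w1 \<in> Sa" "w2 \<in> Sa" "w3 \<in> Sa"
        by (cases x, cases y, cases z) (auto simp: V_def)
      show "Q (x + y) z = Q x z + Q y z \<and> Q (c *\<^sub>R x) z = c * Q x z \<and>
            Q z (x + y) = Q z x + Q z y \<and> Q z (c *\<^sub>R x) = c * Q z x"
        unfolding xyz using w by (simp add: a1 s1 a2 s2 aa1 as1 aa2 as2 algebra_simps)
    qed
    have Qsym: "\<forall>x\<in>V. \<forall>y\<in>V. Q x y = Q y x"
    proof (intro ballI)
      fix x y assume "x \<in> V" "y \<in> V"
      then obtain x1 u1 xb1 w1 y1 u2 yb1 w2 where
        xy: "x = ((x1,u1,xb1),w1)" "y = ((y1,u2,yb1),w2)" and w: "w1 \<in> Sa" "w2 \<in> Sa"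
        by (cases x, cases y) (auto simp: V_def)
      show "Q x y = Q y x" unfolding xy using w asym[OF w] bsym[of u1 u2] by simp
    qed
    have inv: "\<forall>x\<in>V. \<forall>y\<in>V. \<forall>z\<in>V. Q (br x y) z = - Q y (br x z)"
    proof (intro ballI)
      fix x y z assume "x \<in> V" "y \<in> V" "z \<in> V"
      then obtain x1 u1 xb1 w1 y1 u2 yb1 w2 z1 u3 zb1 w3 where
        xyz: "x = ((x1,u1,xb1),w1)" "y = ((y1,u2,yb1),w2)" "z = ((z1,u3,zb1),w3)"
        and w: "w1 \<in> Sa" "w2 \<in> Sa" "w3 \<in> Sa"
        by (cases x, cases y, cases z) (auto simp: V_def)
      have d: "Bg (a - b) c = Bg a c - Bg b c" "Bg c (a - b) = Bg c a - Bg c b" for a b c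
        using a1[of a "- b" c] a2[of c a "- b"] Bneg by simp_all
      have k1: "Bg (A u2) u3 = - Bg u2 (A u3)" using A_skew by simp
      have k2: "Bg u2 (A u1) = Bg (A u1) u2" by (rule bsym)
      show "Q (br x y) z = - Q y (br x z)"
        unfolding xyz using w Ba0 k1 k2 by (simp add: d s1 s2 algebra_simps)
    qed
    have anti: "\<forall>x\<in>V. \<forall>y\<in>V. br x y = - br y x"
    proof (intro ballI)
      fix x y assume "x \<in> V" "y \<in> V"
      then obtain x1 u1 xb1 w1 y1 u2 yb1 w2 where
        xy: "x = ((x1,u1,xb1),w1)" "y = ((y1,u2,yb1),w2)"
        by (cases x, cases y) auto
      have "Bg (A u1) u2 = - Bg (A u2) u1" using A_skew bsym by metis
      then show "br x y = - br y x" unfolding xy by simp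
    qed
    have brV: "\<forall>x\<in>V. \<forall>y\<in>V. br x y \<in> V"
    proof (intro ballI)
      fix x y assume "x \<in> V" "y \<in> V"
      then obtain x1 u1 xb1 w1 y1 u2 yb1 w2 where
        xy: "x = ((x1,u1,xb1),w1)" "y = ((y1,u2,yb1),w2)"
        by (cases x, cases y) auto
      show "br x y \<in> V" unfolding xy by simp
    qed
    note dc = deriv_cocycle[OF Qbil Qsym inv anti brV D]
    have z: "\<forall>y\<in>V. Q (D (dext_e, 0)) y = 0"
      using core_app[of "\<lambda>x y. Q (D x) y"] dc by blast
    have DeV: "D (dext_e, 0) \<in> V" using D(1) eV unfolding lie_derivation_on_def linear_on_carrier_def by blast
    then obtain x1 u1 xb1 w1 where De: "D (dext_e, 0) = ((x1,u1,xb1),w1)" and w1: "w1 \<in> Sa"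
      by (cases "D (dext_e, 0)") auto
    have "Q (D (dext_e, 0)) ((0,0,1),0) = 0" using z by simp
    then have "x1 = 0" using De w1 Ba0 by simp
    have "Q (D (dext_e, 0)) ((1,0,0),0) = 0" using z by simp
    then have "xb1 = 0" using De w1 Ba0 by simp
    have "Q (D (dext_e, 0)) ((0,v,0),0) = 0" for v using z by simp
    then have "u1 = 0" using De w1 Ba0 ndg by simp
    have "Q (D (dext_e, 0)) ((0,0,0),v) = 0" if "v \<in> Sa" for v using z that by simp
    then have "w1 = 0" using De w1 nda by simp
    show ?thesis unfolding De \<open>x1 = 0\<close> \<open>xb1 = 0\<close> \<open>u1 = 0\<close> \<open>w1 = 0\<close> by (simp only: zero_prod_def)
  qed
  have part2: False if ks: "k_symplectic_on V br k h \<theta>" for k h \<theta>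
  proof -
    have "\<forall>v\<in>V. \<theta> i (dext_e, 0) v = 0" if "i \<in> {1..k}" for i
    proof -
      have "bilinear_on V (\<theta> i) \<and> (\<forall>u\<in>V. \<forall>v\<in>V. \<theta> i u v = - \<theta> i v u) \<and>
        (\<forall>u\<in>V. \<forall>v\<in>V. \<forall>w\<in>V. \<theta> i (br u v) w + \<theta> i (br v w) u + \<theta> i (br w u) v = 0)"
        using ks that unfolding k_symplectic_on_def by blast
      then show ?thesis using core_app[of "\<theta> i"] by blast
    qed
    moreover have "\<forall>u\<in>V. (\<forall>i\<in>{1..k}. \<forall>v\<in>V. \<theta> i u v = 0) \<longrightarrow> u = 0"
      using ks unfolding k_symplectic_on_def by blast
    ultimately have "(dext_e, 0) = (0 :: (real \<times> 'g \<times> real) \<times> 'a)"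
      using eV by blast
    then have "fst (fst ((1::real,0::'g,0::real),0::'a)) = fst (fst (0 :: (real \<times> 'g \<times> real) \<times> 'a))"
      by (simp add: dext_e_def)
    then show False by simp
  qed
  show ?thesis
  proof (intro conjI allI impI notI)
    fix D assume "lie_derivation_on V br D \<and> skew_on V Q D"
    then show "D (dext_e, 0) = 0" using part1 by blast
  next
    fix k h \<theta> assume "k_symplectic_on V br k h \<theta>"
    then show False by (rule part2)
  qed
qed

end
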